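(* Let $n\ge 2$, let $A\in\mathbb{R}^{n\times n}$ be symmetric positive definite, $B=A^{1/2}$, $E=\{x: x^{\top}A^{-1}x=1\}$, fix $x_0$ with $x_0^{\top}A^{-1}x_0=1$ and set $y_0=B^{-1}x_0\in S^{n-1}$. For every parallelepiped $P$ inscribed in $E$ having $x_0$ as a vertex, \[ L(P)\le 2^n\sqrt{\operatorname{tr}(A)}. \] Moreover, write the edge vectors of $P$, with signs chosen so that $x_0=\tfrac12\sum_i v_i$, as $v_i=\lambda_iBu_i$ with $\lambda_i>0$ and $U=[u_1\ \cdots\ u_n]\in O(n)$. Then equality holds if and only if, writing $z:=U^{\top}y_0$, \[ \operatorname{diag}\big(U^{\top}AU\big)=\operatorname{tr}(A)\,z\odot z\quad\text{and}\quad \lambda_i=2z_i\ (i=1,\dots,n). \]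
   Context: A (centred, $n$-dimensional) parallelepiped with linearly independent edge vectors $v_1,\dots,v_n$ is $P=\{\sum_i t_iv_i:|t_i|\le\tfrac12\}$ with vertices $\tfrac12\sum_i\varepsilon_iv_i$, $\varepsilon\in\{\pm1\}^n$; it is inscribed in $E$ if all vertices satisfy $x^{\top}A^{-1}x=1$. For such inscribed $P$, the vectors $B^{-1}v_i$ are pairwise orthogonal, so they can be written as $\lambda_iu_i$ with $U\in O(n)$, $\lambda_i=\|B^{-1}v_i\|$. $L(P)=2^{n-1}\sum_i\|v_i\|$ is the total edge length. $\odot$ is the componentwise (Hadamard) product and $\operatorname{diag}(M)$ the vector of diagonal entries of $M$. *)

theory Defs
  imports "HOL-Analysis.Analysis"
begin

definition sym_posdef :: "real^'n^'n \<Rightarrow> bool" where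
  "sym_posdef A \<longleftrightarrow> transpose A = A \<and> (\<forall>x. x \<noteq> 0 \<longrightarrow> x \<bullet> (A *v x) > 0)"

definition ellipsoid :: "real^'n^'n \<Rightarrow> (real^'n) set" where
  "ellipsoid A = {x. x \<bullet> (matrix_inv A *v x) = 1}"

definition lin_indep_family :: "('n \<Rightarrow> real^'n) \<Rightarrow> bool" where
  "lin_indep_family v \<longleftrightarrow> inj v \<and> independent (range v)"

definition pp_vertices :: "('n::finite \<Rightarrow> real^'n) \<Rightarrow> (real^'n) set" where
  "pp_vertices v = {(1/2) *\<^sub>R (\<Sum>i\<in>UNIV. eps i *\<^sub>R v i) | eps. \<forall>i. eps i \<in> {-1, 1}}"

definition inscribed :: "('n::finite \<Rightarrow> real^'n) \<Rightarrow> real^'n^'n \<Rightarrow> bool" where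
  "inscribed v A \<longleftrightarrow> pp_vertices v \<subseteq> ellipsoid A"

definition edge_length :: "('n::finite \<Rightarrow> real^'n) \<Rightarrow> real" where
  "edge_length v = 2 ^ (CARD('n) - 1) * (\<Sum>i\<in>UNIV. norm (v i))"

end

theory Submission
  imports Defs
begin
lemma mv_sum: "(M::real^'n^'m) *v (\<Sum>i\<in>S. f i) = (\<Sum>i\<in>S. M *v f i)"
  by (induction S rule: infinite_finite_induct) (auto simp: matrix_vector_right_distrib)
lemma inner_mv: "((M::real^'n^'m) *v x) \<bullet> y = x \<bullet> (transpose M *v y)"
  by (metis dot_lmul_matrix transpose_matrix_vector transpose_transpose)
lemma minv: "invertible (M::real^'n^'n) \<Longrightarrow> M ** matrix_inv M = mat 1 \<and> matrix_inv M ** M = mat 1"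
  unfolding invertible_def matrix_inv_def by (rule someI_ex)
lemma posdef_inv: "sym_posdef (B::real^'n^'n) \<Longrightarrow> invertible B"
  unfolding sym_posdef_def invertible_left_inverse matrix_left_invertible_ker
  by (metis inner_zero_right less_irrefl)
lemma diag_eq: "(transpose U ** A ** U) $ i $ i = column i U \<bullet> ((A::real^'n^'n) *v column i U)"
  apply (simp add: matrix_matrix_mult_def matrix_vector_mult_def inner_vec_def column_def transpose_def sum_distrib_left sum_distrib_right mult.assoc mult.left_commute)
  by (subst sum.swap) simp

lemma ell:
  fixes A B :: "real^'n^'n"
  assumes Bs: "transpose B = B" and Bi: "invertible B" and AB: "B ** B = A"
  shows "x \<bullet> (matrix_inv A *v x) = (norm (matrix_inv B *v x))^2"
proof -
  define C where "C = matrix_inv B"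
  have C1: "B ** C = mat 1" "C ** B = mat 1" using minv[OF Bi] by (auto simp: C_def)
  have Ai: "invertible A" using invertible_mult[OF Bi Bi] AB by simp
  have A1: "matrix_inv A ** A = mat 1" using minv[OF Ai] by simp
  have "A ** (C ** C) = mat 1"
    by (metis AB C1 matrix_mul_assoc matrix_mul_rid)
  then have AiC: "matrix_inv A = C ** C"
    by (metis A1 matrix_mul_assoc matrix_mul_lid matrix_mul_rid)
  have "transpose C ** B = mat 1"
    by (metis Bs C1(1) matrix_transpose_mul transpose_mat)
  then have Cs: "transpose C = C"
    by (metis C1(1) matrix_mul_assoc matrix_mul_lid matrix_mul_rid)
  have "x \<bullet> (matrix_inv A *v x) = x \<bullet> (C *v (C *v x))"
    by (simp add: AiC matrix_vector_mul_assoc)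
  also have "\<dots> = (C *v x) \<bullet> (C *v x)" using inner_mv[of C x] Cs by simp
  finally show ?thesis by (simp add: C_def power2_norm_eq_inner)
qed

lemma core:
  fixes A B U :: "real^'n^'n" and lam :: "'n \<Rightarrow> real"
  assumes Bs: "transpose B = B" and AB: "B ** B = A" and U: "orthogonal_matrix U"
    and lam: "\<forall>i. lam i \<ge> 0" and l4: "(\<Sum>i\<in>UNIV. (lam i)^2) = 4" and T: "trace A > 0"
  shows "(\<Sum>i\<in>UNIV. norm (lam i *\<^sub>R (B *v column i U))) \<le> 2 * sqrt (trace A)
     \<and> ((\<Sum>i\<in>UNIV. norm (lam i *\<^sub>R (B *v column i U))) = 2 * sqrt (trace A) \<longleftrightarrow>
        (\<forall>i. (transpose U ** A ** U) $ i $ i = trace A * ((lam i / 2) * (lam i / 2))))"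
proof -
  define d where "d i = (transpose U ** A ** U) $ i $ i" for i
  define b where "b i = norm (B *v column i U)" for i
  define s where "s = sqrt (trace A)"
  have s0: "s > 0" using T by (simp add: s_def)
  have ss: "s * s = trace A" using T by (simp add: s_def)
  have db: "d i = (b i)^2" for i
  proof -
    have "d i = column i U \<bullet> (B *v (B *v column i U))"
      by (simp add: d_def diag_eq AB[symmetric] matrix_vector_mul_assoc)
    also have "\<dots> = (B *v column i U) \<bullet> (B *v column i U)" using inner_mv[of B] Bs by simp
    finally show ?thesis by (simp add: b_def power2_norm_eq_inner)
  qed
  have sumd: "(\<Sum>i\<in>UNIV. d i) = trace A"
  proof -
    have "(\<Sum>i\<in>UNIV. d i) = trace ((transpose U ** A) ** U)" by (simp add: d_def trace_def)
    also have "\<dots> = trace (U ** (transpose U ** A))" by (rule trace_mul_sym)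
    also have "\<dots> = trace A" using U
      by (simp add: matrix_mul_assoc orthogonal_matrix_def)
    finally show ?thesis .
  qed
  have nb: "norm (lam i *\<^sub>R (B *v column i U)) = lam i * b i" for i
    using lam by (simp add: b_def)
  have b0: "b i \<ge> 0" for i by (simp add: b_def)
  have key: "(\<Sum>i\<in>UNIV. (s * lam i - 2 * b i)^2) = 4 * s * (2 * s - (\<Sum>i\<in>UNIV. lam i * b i))"
  proof -
    have "(\<Sum>i\<in>UNIV. (s * lam i - 2 * b i)^2) =
        (\<Sum>i\<in>UNIV. (s * s) * (lam i)^2 - 4 * s * (lam i * b i) + 4 * d i)"
      by (rule sum.cong) (auto simp: db power2_eq_square algebra_simps)
    also have "\<dots> = (s * s) * (\<Sum>i\<in>UNIV. (lam i)^2) - 4 * s * (\<Sum>i\<in>UNIV. lam i * b i) + 4 * (\<Sum>i\<in>UNIV. d i)"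
      by (simp add: sum.distrib sum_subtractf sum_distrib_left)
    also have "\<dots> = 4 * s * (2 * s - (\<Sum>i\<in>UNIV. lam i * b i))"
      unfolding l4 sumd ss by (simp add: algebra_simps ss)
    finally show ?thesis .
  qed
  have nn: "0 \<le> (\<Sum>i\<in>UNIV. (s * lam i - 2 * b i)^2)" by (simp add: sum_nonneg)
  have "0 \<le> 4 * s * (2 * s - (\<Sum>i\<in>UNIV. lam i * b i))" using key nn by simp
  then have le: "(\<Sum>i\<in>UNIV. lam i * b i) \<le> 2 * s"
    using s0 by (simp add: zero_le_mult_iff)
  have eq: "(\<Sum>i\<in>UNIV. lam i * b i) = 2 * s \<longleftrightarrow> (\<forall>i. d i = trace A * ((lam i / 2) * (lam i / 2)))"
  proof -
    have "(\<Sum>i\<in>UNIV. lam i * b i) = 2 * s \<longleftrightarrow> (\<Sum>i\<in>UNIV. (s * lam i - 2 * b i)^2) = 0"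
    proof -
      have "(\<Sum>i\<in>UNIV. lam i * b i) = 2 * s \<longleftrightarrow> 4 * s * (2 * s - (\<Sum>i\<in>UNIV. lam i * b i)) = 0"
        using s0 by auto
      then show ?thesis by (simp only: key)
    qed
    also have "\<dots> \<longleftrightarrow> (\<forall>i. s * lam i = 2 * b i)"
      by (simp add: sum_nonneg_eq_0_iff)
    also have "\<dots> \<longleftrightarrow> (\<forall>i. d i = trace A * ((lam i / 2) * (lam i / 2)))"
    proof (intro iff_allI)
      fix i
      have p1: "s * lam i \<ge> 0" using s0 lam by simp
      have p2: "2 * b i \<ge> 0" using b0 by simp
      have "s * lam i = 2 * b i \<longleftrightarrow> (s * lam i)^2 = (2 * b i)^2"
        using p1 p2 by (metis power2_eq_iff_nonneg)
      also have "\<dots> \<longleftrightarrow> d i = trace A * ((lam i / 2) * (lam i / 2))"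
        unfolding db ss[symmetric] power2_eq_square by argo
      finally show "s * lam i = 2 * b i \<longleftrightarrow> d i = trace A * ((lam i / 2) * (lam i / 2))" .
    qed
    finally show ?thesis .
  qed
  have "(\<Sum>i\<in>UNIV. norm (lam i *\<^sub>R (B *v column i U))) = (\<Sum>i\<in>UNIV. lam i * b i)"
    using nb by simp
  then show ?thesis using le eq unfolding d_def s_def by simp
qed

lemma sign_orth:
  fixes w :: "'n::finite \<Rightarrow> 'a::real_inner"
  assumes H: "\<And>eps. (\<forall>i. eps i \<in> {-1,1}) \<Longrightarrow> (norm (\<Sum>i\<in>UNIV. eps i *\<^sub>R w i))^2 = c"
    and jk: "j \<noteq> k"
  shows "w j \<bullet> w k = 0"
proof -
  define S where "S = (\<Sum>i\<in>UNIV. w i)"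
  define e where "e a b = (\<lambda>i. if i = j then a else if i = k then b else (1::real))" for a b
  have sum_e: "(\<Sum>i\<in>UNIV. e a b i *\<^sub>R w i) = S + (a - 1) *\<^sub>R w j + (b - 1) *\<^sub>R w k" for a b
  proof -
    have "e a b i *\<^sub>R w i = w i + (if i = j then (a-1) *\<^sub>R w j else 0) + (if i = k then (b-1) *\<^sub>R w k else 0)" for i
      using jk by (auto simp: e_def algebra_simps)
    then show ?thesis by (simp add: sum.distrib S_def)
  qed
  have val: "(norm (S + x *\<^sub>R w j + y *\<^sub>R w k))^2 = S \<bullet> S + (x*x) * (w j \<bullet> w j) + (y*y) * (w k \<bullet> w k)
      + 2*x*(S \<bullet> w j) + 2*y*(S \<bullet> w k) + 2*x*y*(w j \<bullet> w k)" for x y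
    by (simp add: power2_norm_eq_inner inner_add_left inner_add_right inner_commute algebra_simps)
  have c: "(norm (S + (a-1) *\<^sub>R w j + (b-1) *\<^sub>R w k))^2 = c" if "a \<in> {-1,1}" "b \<in> {-1,1}" for a b
  proof -
    have "\<forall>i. e a b i \<in> {-1,1}" using that by (auto simp: e_def)
    from H[OF this] show ?thesis by (simp only: sum_e)
  qed
  have c1: "(norm (S + (-2) *\<^sub>R w j + (-2) *\<^sub>R w k))^2 = c" using c[of "-1" "-1"] by simp
  have c2: "(norm (S + 0 *\<^sub>R w j + (-2) *\<^sub>R w k))^2 = c" using c[of "1" "-1"] by simp
  have c3: "(norm (S + (-2) *\<^sub>R w j + 0 *\<^sub>R w k))^2 = c" using c[of "-1" "1"] by simp
  have c4: "(norm (S + 0 *\<^sub>R w j + 0 *\<^sub>R w k))^2 = c" using c[of "1" "1"] by simp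
  show ?thesis using c1 c2 c3 c4 val[of "-2" "-2"] val[of 0 "-2"] val[of "-2" 0] val[of 0 0]
    by linarith
qed

lemma edge_rep:
  fixes A B U :: "real^'n^'n" and lam :: "'n \<Rightarrow> real" and v :: "'n \<Rightarrow> real^'n"
  assumes Bs: "transpose B = B" and AB: "B ** B = A" and U: "orthogonal_matrix U"
    and lam: "\<forall>i. lam i \<ge> 0" and l4: "(\<Sum>i\<in>UNIV. (lam i)^2) = 4" and T: "trace A > 0"
    and v: "\<forall>i. v i = lam i *\<^sub>R (B *v column i U)"
  shows "edge_length v \<le> 2 ^ CARD('n) * sqrt (trace A)
     \<and> (edge_length v = 2 ^ CARD('n) * sqrt (trace A) \<longleftrightarrow>
        (\<forall>i. (transpose U ** A ** U) $ i $ i = trace A * ((lam i / 2) * (lam i / 2))))"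
proof -
  have c: "CARD('n) > 0" by simp
  have p: "(2::real) ^ CARD('n) = 2 ^ (CARD('n) - 1) * 2"
    using c by (metis Suc_diff_1 power_Suc2)
  have q: "(2::real) ^ (CARD('n) - 1) > 0" by simp
  have e: "edge_length v = 2 ^ (CARD('n) - 1) * (\<Sum>i\<in>UNIV. norm (lam i *\<^sub>R (B *v column i U)))"
    using v by (simp add: edge_length_def)
  from core[OF Bs AB U lam l4 T] q show ?thesis
    unfolding e p by (simp add: mult.assoc)
qed

lemma trace_pos:
  fixes A :: "real^'n^'n"
  assumes "sym_posdef A" shows "trace A > 0"
proof -
  have "A $ i $ i > 0" for i
  proof -
    have "axis i 1 \<bullet> (A *v axis i (1::real)) > 0"
      using assms unfolding sym_posdef_def by (simp add: axis_eq_0_iff)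
    then show ?thesis by (simp add: inner_axis' matrix_vector_mul_component inner_axis)
  qed
  then show ?thesis unfolding trace_def by (simp add: sum_pos)
qed

lemma colsum:
  fixes U :: "real^'n^'n"
  shows "(\<Sum>i\<in>UNIV. lam i *\<^sub>R column i U) = U *v (\<chi> i. lam i)"
  by (simp add: vec_eq_iff column_def matrix_vector_mult_def sum_component mult.commute)


theorem proposition3p3:
  fixes A B :: "real^'n^'n" and x0 :: "real^'n"
  assumes n2: "CARD('n) \<ge> 2"
    and A: "sym_posdef A"
    and B: "sym_posdef B" "B ** B = A"
    and x0: "x0 \<in> ellipsoid A"
  shows
    "(\<forall>v :: 'n \<Rightarrow> real^'n. lin_indep_family v \<and> inscribed v A \<and> x0 \<in> pp_vertices v \<longrightarrow>
        edge_length v \<le> 2 ^ CARD('n) * sqrt (trace A))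
     \<and>
     (\<forall>(v :: 'n \<Rightarrow> real^'n) (lam :: 'n \<Rightarrow> real) (U :: real^'n^'n).
        lin_indep_family v \<and> inscribed v A \<and>
        x0 = (1/2) *\<^sub>R (\<Sum>i\<in>UNIV. v i) \<and>
        orthogonal_matrix U \<and> (\<forall>i. lam i > 0) \<and>
        (\<forall>i. v i = lam i *\<^sub>R (B *v column i U)) \<longrightarrow>
        (let y0 = matrix_inv B *v x0; z = transpose U *v y0 in
          edge_length v = 2 ^ CARD('n) * sqrt (trace A) \<longleftrightarrow>
          ((\<forall>i. (transpose U ** A ** U) $ i $ i = trace A * (z $ i * z $ i)) \<and>
           (\<forall>i. lam i = 2 * z $ i))))"
  proof -
  define C where "C = matrix_inv B"
  have Bs: "transpose B = B" using B(1) by (simp add: sym_posdef_def)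
  have Bi: "invertible B" using posdef_inv[OF B(1)] .
  have C1: "B ** C = mat 1" "C ** B = mat 1" using minv[OF Bi] by (auto simp: C_def)
  have CB: "C *v (B *v y) = y" for y by (simp add: matrix_vector_mul_assoc C1)
  have BC: "B *v (C *v y) = y" for y by (simp add: matrix_vector_mul_assoc C1)
  have T: "trace A > 0" using trace_pos[OF A] .
  have ellC: "x \<in> ellipsoid A \<longleftrightarrow> (norm (C *v x))^2 = 1" for x
    using ell[OF Bs Bi B(2)] by (simp add: ellipsoid_def C_def)
  have part1: "edge_length v \<le> 2 ^ CARD('n) * sqrt (trace A)"
    if lv: "lin_indep_family v" and iv: "inscribed v A" for v :: "'n \<Rightarrow> real^'n"
  proof -
    define w where "w i = C *v v i" for i
    have Bw: "B *v w i = v i" for i by (simp add: w_def BC)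
    have v0: "v i \<noteq> 0" for i
      using lv dependent_zero[of "range v"] unfolding lin_indep_family_def
      by (metis rangeI)
    have w0: "w i \<noteq> 0" for i using v0 Bw by (metis matrix_vector_mult_0_right)
    have H: "(norm (\<Sum>i\<in>UNIV. eps i *\<^sub>R w i))^2 = 4" if eps: "\<forall>i. eps i \<in> {-1,1}" for eps
    proof -
      define p where "p = (1/2) *\<^sub>R (\<Sum>i\<in>UNIV. eps i *\<^sub>R v i)"
      have "p \<in> pp_vertices v" unfolding pp_vertices_def p_def using eps by blast
      then have "p \<in> ellipsoid A" using iv by (auto simp: inscribed_def)
      then have n1: "(norm (C *v p))^2 = 1" using ellC by simp
      have "C *v p = (1/2) *\<^sub>R (\<Sum>i\<in>UNIV. eps i *\<^sub>R w i)"
        by (simp add: p_def mv_sum matrix_vector_mult_scaleR w_def)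
      then have "(norm (C *v p))^2 = (1/4) * (norm (\<Sum>i\<in>UNIV. eps i *\<^sub>R w i))^2"
        by (simp add: power2_eq_square)
      then show ?thesis using n1 by simp
    qed
    have orth: "w j \<bullet> w k = 0" if "j \<noteq> k" for j k
      using sign_orth[of w 4, OF H that] by blast
    have "(norm (\<Sum>i\<in>UNIV. (1::real) *\<^sub>R w i))^2 = 4" by (rule H) simp
    then have "(norm (\<Sum>i\<in>UNIV. w i))^2 = 4" by simp
    moreover have "(norm (\<Sum>i\<in>UNIV. w i))^2 = (\<Sum>i\<in>UNIV. (norm (w i))^2)"
      by (rule norm_sum_Pythagorean) (auto simp: pairwise_def orthogonal_def orth)
    ultimately have l4: "(\<Sum>i\<in>UNIV. (norm (w i))^2) = 4" by simp
    define lam where "lam i = norm (w i)" for i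
    have lpos: "lam i > 0" for i using w0 by (simp add: lam_def)
    define U :: "real^'n^'n" where "U = transpose (\<chi> i. (1 / lam i) *\<^sub>R w i)"
    have colU: "column i U = (1 / lam i) *\<^sub>R w i" for i
      by (simp add: U_def row_def vec_eq_iff)
    have oU: "orthogonal_matrix U"
      unfolding orthogonal_matrix_orthonormal_columns
    proof (intro conjI allI impI)
      fix i show "norm (column i U) = 1" using lpos[of i] by (simp add: colU lam_def)
    next
      fix i j :: 'n assume "i \<noteq> j"
      then show "orthogonal (column i U) (column j U)"
        by (simp add: colU orthogonal_def orth)
    qed
    have vrep: "\<forall>i. v i = lam i *\<^sub>R (B *v column i U)"
      using lpos by (simp add: colU matrix_vector_mult_scaleR Bw less_imp_neq[symmetric])
    have "\<forall>i. lam i \<ge> 0" using lpos less_imp_le by blast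
    from edge_rep[OF Bs B(2) oU this _ T vrep] l4 show ?thesis by (simp add: lam_def)
  qed
  have part2: "(let y0 = matrix_inv B *v x0; z = transpose U *v y0 in
          edge_length v = 2 ^ CARD('n) * sqrt (trace A) \<longleftrightarrow>
          ((\<forall>i. (transpose U ** A ** U) $ i $ i = trace A * (z $ i * z $ i)) \<and>
           (\<forall>i. lam i = 2 * z $ i)))"
    if x0v: "x0 = (1/2) *\<^sub>R (\<Sum>i\<in>UNIV. v i)" and oU: "orthogonal_matrix U"
      and lpos: "\<forall>i. lam i > 0" and vrep: "\<forall>i. v i = lam i *\<^sub>R (B *v column i U)"
    for v :: "'n \<Rightarrow> real^'n" and lam and U :: "real^'n^'n"
  proof -
    define l :: "real^'n" where "l = (\<chi> i. lam i)"
    have Cx0: "C *v x0 = (1/2) *\<^sub>R (U *v l)"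
    proof -
      have "C *v x0 = (1/2) *\<^sub>R (\<Sum>i\<in>UNIV. lam i *\<^sub>R column i U)"
        using vrep by (simp add: x0v mv_sum matrix_vector_mult_scaleR CB)
      then show ?thesis by (simp add: colsum l_def)
    qed
    have UtU: "transpose U ** U = mat 1" using oU by (simp add: orthogonal_matrix_def)
    have z: "transpose U *v (C *v x0) = (1/2) *\<^sub>R l"
      by (simp add: Cx0 matrix_vector_mult_scaleR matrix_vector_mul_assoc UtU)
    have "(norm (C *v x0))^2 = 1" using x0 ellC by simp
    moreover have "(norm (C *v x0))^2 = (1/4) * (l \<bullet> l)"
    proof -
      have "(norm (U *v l))^2 = l \<bullet> l"
        using inner_mv[of U l "U *v l"]
        by (simp add: power2_norm_eq_inner matrix_vector_mul_assoc UtU)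
      then show ?thesis by (simp add: Cx0 power2_eq_square)
    qed
    ultimately have "l \<bullet> l = 4" by simp
    then have l4: "(\<Sum>i\<in>UNIV. (lam i)^2) = 4"
      by (simp add: l_def inner_vec_def power2_eq_square)
    have "\<forall>i. lam i \<ge> 0" using lpos less_imp_le by blast
    note er = edge_rep[OF Bs B(2) oU this l4 T vrep]
    have zi: "(transpose U *v (C *v x0)) $ i = lam i / 2" for i
    proof -
      have "((1/2) *\<^sub>R l) $ i = lam i / 2" by (simp add: l_def)
      then show ?thesis by (simp only: z)
    qed
    show ?thesis unfolding Let_def C_def[symmetric] zi using er by simp
  qed
  show ?thesis using part1 part2 by blast
qed

end
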